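(* For all $m,n\in\mathbb{N}$ with $mn>1$ and every $\boldsymbol{\gamma}\in[0,1)^m$, we have $\Omega^{\boldsymbol{\gamma}}(m,n)\neq\emptyset$.
   Context: $[0,1)^{m\times n}$ is the set of real $m\times n$ matrices with entries in $[0,1)$. For $\boldsymbol{x}\in\mathbb{R}^n$, $\|\boldsymbol{x}\|=\max_i|x_i|$; for $\boldsymbol{y}\in\mathbb{R}^m$, $\langle\boldsymbol{y}\rangle=\min_{\boldsymbol{p}\in\mathbb{Z}^m}\|\boldsymbol{y}-\boldsymbol{p}\|$. For $\psi:\mathbb{N}\to[0,\infty)$, $W_{m,n}(\psi)$ is the set of pairs $(A,\boldsymbol{\gamma})\in[0,1)^{m\times n}\times[0,1)^m$ such that $\langle A\boldsymbol{q}-\boldsymbol{\gamma}\rangle<\psi(\|\boldsymbol{q}\|)$ for infinitely many $\boldsymbol{q}\in\mathbb{Z}^n$. "Decreasing" means non-increasing. $\mathcal{D}$ is the set of decreasing $\psi:\mathbb{N}\to[0,\infty)$ with $\sum_{q\ge1}q^{n-1}\psi(q)^m=\infty$. $\Omega(m,n)=\bigcap_{\psi\in\mathcal{D}}W_{m,n}(\psi)$ and $\Omega^{\boldsymbol{\gamma}}(m,n)=\{A\in[0,1)^{m\times n}:(A,\boldsymbol{\gamma})\in\Omega(m,n)\}$. *)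

theory Defs
  imports "HOL-Analysis.Analysis"
begin

text \<open>Dimensions m and n are the cardinalities of finite index types 'm and 'n.
  Matrices A in R^{m x n} are real^'n^'m, vectors gamma are real^'m, q in Z^n is int^'n.\<close>

definition unit_cube :: "(real^'m) set" where
  "unit_cube = {g. \<forall>i. 0 \<le> g $ i \<and> g $ i < 1}"

definition unit_mat :: "(real^'n^'m) set" where
  "unit_mat = {A. \<forall>i j. 0 \<le> A $ i $ j \<and> A $ i $ j < 1}"

definition int_sup_norm :: "int^'n \<Rightarrow> nat" where
  "int_sup_norm q = nat (Max (range (\<lambda>i. \<bar>q $ i\<bar>)))"

definition real_sup_norm :: "real^'m \<Rightarrow> real" where
  "real_sup_norm y = Max (range (\<lambda>i. \<bar>y $ i\<bar>))"

definition dist_Zm :: "real^'m \<Rightarrow> real" where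
  "dist_Zm y = Inf (range (\<lambda>p::int^'m. real_sup_norm (y - (\<chi> i. real_of_int (p $ i)))))"

definition W_set :: "(nat \<Rightarrow> real) \<Rightarrow> ((real^'n^'m) \<times> (real^'m)) set" where
  "W_set \<psi> = {(A, g). A \<in> unit_mat \<and> g \<in> unit_cube \<and>
      infinite {q::int^'n. dist_Zm (A *v (\<chi> j. real_of_int (q $ j)) - g) < \<psi> (int_sup_norm q)}}"

definition D_class :: "'m::finite itself \<Rightarrow> 'n::finite itself \<Rightarrow> (nat \<Rightarrow> real) set" where
  "D_class _ _ = {\<psi>. (\<forall>q. 0 \<le> \<psi> q) \<and> (\<forall>a b. a \<le> b \<longrightarrow> \<psi> b \<le> \<psi> a) \<and>
      \<not> summable (\<lambda>k. real (Suc k) ^ (CARD('n) - 1) * \<psi> (Suc k) ^ CARD('m))}"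

definition Omega :: "((real^'n::finite^'m::finite) \<times> (real^'m)) set" where
  "Omega = (\<Inter>\<psi>\<in>D_class TYPE('m) TYPE('n). W_set \<psi>)"

definition Omega_gamma :: "real^'m \<Rightarrow> (real^'n^'m) set" where
  "Omega_gamma g = {A. A \<in> unit_mat \<and> (A, g) \<in> Omega}"

end

theory Submission
  imports Defs
begin


fun Qs :: "nat \<Rightarrow> nat" where
  "Qs 0 = 2" | "Qs (Suc k) = Qs k ^ 4"

lemma Qs_ge2: "Qs k \<ge> 2"
proof (induction k)
  case (Suc k)
  have "Qs k ^ 1 \<le> Qs k ^ 4" using Suc by (intro power_increasing) auto
  then show ?case using Suc by simp
qed simp

lemma Qs_Suc_ge: "2 * Qs k \<le> Qs (Suc k)"
proof -
  have "Qs k * 2 \<le> Qs k * (Qs k ^ 3)"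
  proof (rule mult_left_mono)
    have "2 ^ 1 \<le> Qs k ^ 3" using Qs_ge2[of k] power_mono[of 2 "Qs k" 3] by simp
    then show "2 \<le> Qs k ^ 3" by simp
  qed simp
  then show ?thesis by (simp add: power_Suc[symmetric] mult.commute eval_nat_numeral)
qed

declare Qs.simps(2)[simp del]

lemma Qs_gt: "k < Qs k"
proof (induction k)
  case (Suc k) then show ?case using Qs_Suc_ge[of k] by linarith
qed simp

lemma Qs_mono: "j \<le> k \<Longrightarrow> Qs j \<le> Qs k"
proof (induction k rule: dec_induct)
  case (step n) then show ?case using Qs_Suc_ge[of n] by linarith
qed simp

fun Ns :: "real \<Rightarrow> nat \<Rightarrow> int" where
  "Ns c 0 = 0"
| "Ns c (Suc k) = round (real (Qs (Suc k)) * ((c + of_int (Ns c k)) / real (Qs k)) - c)"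

definition xs :: "real \<Rightarrow> nat \<Rightarrow> real" where
  "xs c k = (c + of_int (Ns c k)) / real (Qs k)"

lemma xs_step: "\<bar>xs c (Suc k) - xs c k\<bar> \<le> 1 / (2 * real (Qs (Suc k)))"
proof -
  define y where "y = real (Qs (Suc k)) * xs c k - c"
  have Q: "real (Qs (Suc k)) > 0" using Qs_ge2[of "Suc k"] by linarith
  have e1: "xs c (Suc k) = (c + of_int (round y)) / real (Qs (Suc k))"
    by (simp only: xs_def Ns.simps y_def) 
  have e2: "xs c k = (c + y) / real (Qs (Suc k))" using Q by (simp add: y_def)
  have "xs c (Suc k) - xs c k = (of_int (round y) - y) / real (Qs (Suc k))"
    using e1 e2 Q by (simp add: field_simps)
  moreover have "\<bar>of_int (round y) - y\<bar> \<le> 1/2"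
    using of_int_round_le[of y] of_int_round_ge[of y] by linarith
  ultimately have "\<bar>xs c (Suc k) - xs c k\<bar> \<le> (1/2) / real (Qs (Suc k))"
    using Q by (simp only: abs_divide abs_of_pos, intro divide_right_mono) auto
  then show ?thesis by simp
qed

lemma xs_diff: "k \<le> j \<Longrightarrow> \<bar>xs c j - xs c k\<bar> \<le> 1 / real (Qs (Suc k)) - 1 / real (Qs (Suc j))"
proof (induction j rule: dec_induct)
  case (step n)
  have s: "\<bar>xs c (Suc n) - xs c n\<bar> \<le> 1 / (2 * real (Qs (Suc n)))" by (rule xs_step)
  have q1: "real (Qs (Suc n)) \<ge> 2" using Qs_ge2[of "Suc n"] by linarith
  have q2: "2 * real (Qs (Suc n)) \<le> real (Qs (Suc (Suc n)))" using Qs_Suc_ge[of "Suc n"] by linarith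
  have "1 / real (Qs (Suc (Suc n))) \<le> 1 / (2 * real (Qs (Suc n)))"
    using q1 q2 by (intro divide_left_mono) auto
  moreover have "1 / (2 * real (Qs (Suc n))) + 1 / (2 * real (Qs (Suc n))) = 1 / real (Qs (Suc n))"
    by simp
  ultimately show ?case using step s by linarith
qed simp

lemma xs_diff': "k \<le> j \<Longrightarrow> \<bar>xs c j - xs c k\<bar> \<le> 1 / real (Qs (Suc k))"
  using xs_diff[of k j c] Qs_ge2[of "Suc j"] by (smt (verit) divide_nonneg_nonneg of_nat_0_le_iff)

lemma xs_approx: "\<exists>X. \<forall>k. \<bar>X - xs c k\<bar> \<le> 1 / real (Qs (Suc k))"
proof -
  have "Cauchy (xs c)"
  proof (rule metric_CauchyI)
    fix e :: real assume e: "e > 0"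
    obtain M :: nat where M: "2 / e < real M" using reals_Archimedean2 by blast
    have "2 / real (Qs (Suc M)) < e"
    proof -
      have "real M < real (Qs (Suc M))" using Qs_gt[of "Suc M"] by linarith
      then have "2 / e < real (Qs (Suc M))" using M by linarith
      then show ?thesis using e Qs_ge2[of "Suc M"] by (simp add: field_simps)
    qed
    moreover have "\<forall>m\<ge>M. \<forall>n\<ge>M. dist (xs c m) (xs c n) \<le> 2 / real (Qs (Suc M))"
    proof (intro allI impI)
      fix m n assume "M \<le> m" "M \<le> n"
      then have "\<bar>xs c m - xs c M\<bar> \<le> 1 / real (Qs (Suc M))" "\<bar>xs c n - xs c M\<bar> \<le> 1 / real (Qs (Suc M))"
        using xs_diff' by auto
      moreover have "2 / real (Qs (Suc M)) = 1 / real (Qs (Suc M)) + 1 / real (Qs (Suc M))" by simp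
      ultimately show "dist (xs c m) (xs c n) \<le> 2 / real (Qs (Suc M))" unfolding dist_real_def by linarith
    qed
    ultimately show "\<exists>M. \<forall>m\<ge>M. \<forall>n\<ge>M. dist (xs c m) (xs c n) < e" by force
  qed
  then obtain X where X: "xs c \<longlonglongrightarrow> X" using Cauchy_convergent_iff convergent_def by blast
  have "\<bar>X - xs c k\<bar> \<le> 1 / real (Qs (Suc k))" for k
  proof (rule LIMSEQ_le_const2)
    show "(\<lambda>j. \<bar>xs c j - xs c k\<bar>) \<longlonglongrightarrow> \<bar>X - xs c k\<bar>"
      by (intro tendsto_intros X)
    show "\<exists>N. \<forall>n\<ge>N. \<bar>xs c n - xs c k\<bar> \<le> 1 / real (Qs (Suc k))"
      using xs_diff' by blast
  qed
  then show ?thesis by blast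
qed

lemma approx_real: "\<exists>X. 0 \<le> X \<and> X < 1 \<and> (\<forall>k. \<exists>p::int.
   \<bar>real (Qs k) * X - c - of_int p\<bar> \<le> real (Qs k) / real (Qs (Suc k)))"
proof -
  obtain X where X: "\<And>k. \<bar>X - xs c k\<bar> \<le> 1 / real (Qs (Suc k))" using xs_approx by blast
  define Y where "Y = X - of_int (floor X)"
  have "\<exists>p::int. \<bar>real (Qs k) * Y - c - of_int p\<bar> \<le> real (Qs k) / real (Qs (Suc k))" for k
  proof -
    have Q: "real (Qs k) > 0" using Qs_ge2[of k] by linarith
    have xk: "real (Qs k) * xs c k = c + of_int (Ns c k)" using Q by (simp add: xs_def)
    have "real (Qs k) * Y - c - of_int (Ns c k - int (Qs k) * floor X) = real (Qs k) * (X - xs c k)"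
      using xk by (simp add: Y_def algebra_simps)
    moreover have "\<bar>real (Qs k) * (X - xs c k)\<bar> \<le> real (Qs k) / real (Qs (Suc k))"
    proof -
      have "\<bar>real (Qs k) * (X - xs c k)\<bar> = real (Qs k) * \<bar>X - xs c k\<bar>" using Q by (simp add: abs_mult)
      also have "\<dots> \<le> real (Qs k) * (1 / real (Qs (Suc k)))" using X[of k] Q by (intro mult_left_mono) auto
      finally show ?thesis by simp
    qed
    ultimately show ?thesis by metis
  qed
  moreover have "0 \<le> Y" "Y < 1" unfolding Y_def by linarith+
  ultimately show ?thesis by blast
qed



lemma summable_f: "summable (\<lambda>k. 1 / (real (Suc k) * sqrt (real (Suc k))))"
proof -
  have s0: "summable (\<lambda>n. real n powr (-3/2))" using summable_real_powr_iff[of "-3/2"] by simp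
  have s: "summable (\<lambda>k. real (Suc k) powr (-3/2))"
    using summable_Suc_iff[where f="\<lambda>n. real n powr (-3/2)"] s0 by blast
  have eq: "real (Suc k) powr (-3/2) = 1 / (real (Suc k) * sqrt (real (Suc k)))" for k
  proof -
    have "real (Suc k) powr (3/2) = real (Suc k) powr (1 + 1/2)" by simp
    also have "\<dots> = real (Suc k) powr 1 * real (Suc k) powr (1/2)"
      by (rule powr_add)
    also have "\<dots> = real (Suc k) * sqrt (real (Suc k))"
      by (simp add: powr_half_sqrt)
    finally have "real (Suc k) powr (3/2) = real (Suc k) * sqrt (real (Suc k))" .
    moreover have "real (Suc k) powr (-3/2) = 1 / real (Suc k) powr (3/2)"
      using powr_minus_divide[of "real (Suc k)" "3/2"] by simp
    ultimately show ?thesis by simp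
  qed
  show ?thesis using s unfolding eq .
qed
lemma find_block: assumes "Qs K \<le> q" shows "\<exists>j\<ge>K. Qs j \<le> q \<and> q < Qs (Suc j)"
proof -
  define i where "i = (LEAST i. q < Qs i)"
  have ex: "q < Qs q" by (rule Qs_gt)
  have i1: "q < Qs i" unfolding i_def by (rule LeastI[of _ q], rule ex)
  have i2: "\<And>l. l < i \<Longrightarrow> \<not> q < Qs l" unfolding i_def by (rule not_less_Least)
  have "K < i" using i1 assms Qs_mono[of i K] by (cases "i \<le> K") auto
  then obtain j where j: "i = Suc j" "K \<le> j" by (cases i) auto
  then show ?thesis using i1 i2[of j] by auto
qed

lemma freq:
  fixes \<psi> :: "nat \<Rightarrow> real"
  assumes nn: "\<forall>q. 0 \<le> \<psi> q" and dec: "\<forall>a b. a \<le> b \<longrightarrow> \<psi> b \<le> \<psi> a"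
    and ns: "\<not> summable (\<lambda>k. \<psi> (Suc k) ^ M)" and M: "M \<ge> 2"
  shows "infinite {k. real (Qs k) / real (Qs (Suc k)) < \<psi> (Qs k)}"
proof
  assume fin: "finite {k. real (Qs k) / real (Qs (Suc k)) < \<psi> (Qs k)}"
  obtain B where B: "\<And>k. k \<in> {k. real (Qs k) / real (Qs (Suc k)) < \<psi> (Qs k)} \<Longrightarrow> k \<le> B"
    using finite_nat_set_iff_bounded_le[THEN iffD1, OF fin] by blast
  have K: "\<psi> (Qs k) \<le> real (Qs k) / real (Qs (Suc k))" if "k \<ge> Suc B" for k
    using B[of k] that by force
  define K where "K = Suc B"
  note K = K[folded K_def]
  have "summable (\<lambda>k. \<psi> (Suc k) ^ M)"
  proof (rule summable_comparison_test'[OF summable_f])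
    fix k assume k: "Qs K \<le> k"
    define q where "q = Suc k"
    obtain j where j: "j \<ge> K" "Qs j \<le> q" "q < Qs (Suc j)" using find_block[of K q] k q_def by auto
    define Q where "Q = real (Qs j)"
    have Q2: "Q \<ge> 2" unfolding Q_def using Qs_ge2[of j] by linarith
    have QS: "real (Qs (Suc j)) = Q ^ 4" unfolding Q_def by (simp add: Qs.simps(2))
    have "\<psi> q \<le> \<psi> (Qs j)" using dec j by auto
    also have "\<dots> \<le> Q / Q ^ 4" using K[OF j(1)] QS Q_def by simp
    also have "\<dots> = 1 / Q ^ 3" using Q2 by (simp add: eval_nat_numeral field_simps)
    finally have p1: "\<psi> q \<le> 1 / Q ^ 3" .
    have "1 \<le> Q ^ 3" using Q2 by (intro one_le_power) auto
    then have "1 / Q ^ 3 \<le> 1" using Q2 by (simp add: divide_le_eq)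
    then have p1': "\<psi> q \<le> 1" using p1 by linarith
    have "\<psi> q ^ M \<le> \<psi> q ^ 2" using p1' nn M by (intro power_decreasing) auto
    also have "\<dots> \<le> (1 / Q ^ 3) ^ 2" using p1 nn by (intro power_mono) auto
    also have "\<dots> = 1 / Q ^ 6" by (simp add: power_divide flip: power_mult)
    also have "\<dots> \<le> 1 / (real q * sqrt (real q))"
    proof -
      have qq: "real q \<le> Q ^ 4" using j(3) QS by (metis less_or_eq_imp_le of_nat_le_iff)
      have "sqrt (real q) \<le> sqrt (Q ^ 4)" using qq by simp
      also have "sqrt (Q ^ 4) = Q ^ 2"
      proof -
        have "Q ^ 4 = (Q ^ 2) ^ 2" by (simp flip: power_mult)
        then show ?thesis by (simp only: real_sqrt_abs) simp
      qed
      finally have sq: "sqrt (real q) \<le> Q ^ 2" .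
      have "real q * sqrt (real q) \<le> Q ^ 4 * Q ^ 2" using qq sq by (intro mult_mono) auto
      also have "\<dots> = Q ^ 6" by (simp flip: power_add)
      finally have "real q * sqrt (real q) \<le> Q ^ 6" .
      moreover have "0 < real q * sqrt (real q)" unfolding q_def by simp
      moreover have "0 < Q ^ 6" using Q2 by simp
      ultimately show ?thesis by (intro divide_left_mono) auto
    qed
    finally show "norm (\<psi> (Suc k) ^ M) \<le> 1 / (real (Suc k) * sqrt (real (Suc k)))"
      using nn unfolding q_def by simp
  qed
  then show False using ns by blast
qed



lemma rsn_nonneg: "0 \<le> real_sup_norm (y :: real^'m)"
proof -
  have "\<bar>y $ undefined\<bar> \<le> real_sup_norm y" unfolding real_sup_norm_def
    by (rule Max_ge) auto
  then show ?thesis by linarith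
qed

lemma rsn_le: "(\<And>i. \<bar>y $ i\<bar> \<le> e) \<Longrightarrow> real_sup_norm (y :: real^'m) \<le> e"
  unfolding real_sup_norm_def by (subst Max_le_iff) auto

lemma dist_Zm_le: "dist_Zm y \<le> real_sup_norm (y - (\<chi> i. real_of_int (p $ i)))"
  unfolding dist_Zm_def
proof (rule cInf_lower)
  show "bdd_below (range (\<lambda>p::int^'a. real_sup_norm (y - (\<chi> i. real_of_int (p $ i)))))"
    by (rule bdd_belowI[of _ 0]) (auto intro: rsn_nonneg)
qed auto

lemma isn_const: "int_sup_norm ((\<chi> j. int N) :: int^'n) = N"
proof -
  have "range (\<lambda>i. \<bar>((\<chi> j. int N) :: int^'n) $ i\<bar>) = {int N}" by auto
  then show ?thesis unfolding int_sup_norm_def by simp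
qed

lemma psi_pos: assumes "\<psi> \<in> D_class TYPE('m::finite) TYPE('n::finite)" shows "\<psi> q > 0"
proof (rule ccontr)
  assume "\<not> \<psi> q > 0"
  have nn: "\<forall>q. 0 \<le> \<psi> q" and dec: "\<forall>a b. a \<le> b \<longrightarrow> \<psi> b \<le> \<psi> a"
    and ns: "\<not> summable (\<lambda>k. real (Suc k) ^ (CARD('n) - 1) * \<psi> (Suc k) ^ CARD('m))"
    using assms unfolding D_class_def by auto
  have z: "\<psi> k = 0" if "k \<ge> q" for k
  proof -
    have "\<psi> k \<le> \<psi> q" using dec that by blast
    moreover have "0 \<le> \<psi> k" using nn by blast
    ultimately show ?thesis using \<open>\<not> \<psi> q > 0\<close> by linarith
  qed
  have "summable (\<lambda>k. real (Suc k) ^ (CARD('n) - 1) * \<psi> (Suc k) ^ CARD('m))"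
  proof (rule summable_comparison_test'[of "\<lambda>_. 0" q])
    fix k assume "q \<le> k"
    then have "\<psi> (Suc k) = 0" using z by simp
    then show "norm (real (Suc k) ^ (CARD('n) - 1) * \<psi> (Suc k) ^ CARD('m)) \<le> 0" by (simp add: zero_power zero_less_card_finite)
  qed simp
  then show False using ns by blast
qed

lemma case_n2:
  fixes g :: "real^'m::finite"
  assumes n2: "CARD('n::finite) \<ge> 2" and g: "g \<in> unit_cube"
  shows "(Omega_gamma g :: (real^'n^'m) set) \<noteq> {}"
proof -
  obtain j1 j2 :: 'n where j12: "j1 \<noteq> j2"
  proof -
    have "\<exists>j2::'n. j2 \<noteq> undefined"
    proof (rule ccontr)
      assume "\<not> (\<exists>j2::'n. j2 \<noteq> undefined)"
      then have "(UNIV::'n set) \<subseteq> {undefined}" by auto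
      then have "CARD('n) \<le> card {undefined::'n}" by (intro card_mono) auto
      then show False using n2 by simp
    qed
    then obtain j2 :: 'n where "j2 \<noteq> undefined" by auto
    then show ?thesis using that by blast
  qed
  define A :: "real^'n^'m" where "A = (\<chi> i j. if j = j1 then g $ i else 0)"
  have Au: "A \<in> unit_mat" using g unfolding A_def unit_mat_def unit_cube_def by auto
  define v :: "nat \<Rightarrow> int^'n" where "v t = (\<chi> j. if j = j1 then 1 else if j = j2 then int t else 0)" for t
  have inj: "inj v"
  proof (rule injI)
    fix s t assume "v s = v t"
    then have "v s $ j2 = v t $ j2" by simp
    then show "s = t" using j12 unfolding v_def by auto
  qed
  have Av: "A *v (\<chi> j. real_of_int (v t $ j)) - g = 0" for t
  proof -
    have "(A *v (\<chi> j. real_of_int (v t $ j))) $ i = g $ i" for i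
      unfolding A_def v_def matrix_vector_mult_def
      by (simp add: if_distrib[of "\<lambda>x. x * _"] cong: if_cong)
    then show ?thesis by (simp add: vec_eq_iff)
  qed
  have d0: "dist_Zm (0::real^'m) \<le> 0"
  proof -
    have "(\<chi> i. real_of_int ((0::int^'m)$i)) = (0::real^'m)" by (simp add: vec_eq_iff)
    then show ?thesis using dist_Zm_le[of "0::real^'m" 0] rsn_le[of "0::real^'m" 0] by simp
  qed
  have "(A, g) \<in> Omega"
    unfolding Omega_def
  proof
    fix \<psi> assume psi: "\<psi> \<in> D_class TYPE('m) TYPE('n)"
    have "range v \<subseteq> {q::int^'n. dist_Zm (A *v (\<chi> j. real_of_int (q $ j)) - g) < \<psi> (int_sup_norm q)}"
      using Av d0 psi_pos[OF psi] by (auto intro: le_less_trans)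
    moreover have "infinite (range v)" using inj by (simp add: finite_image_iff)
    ultimately show "(A, g) \<in> W_set \<psi>" unfolding W_set_def using Au g infinite_super by blast
  qed
  then show ?thesis unfolding Omega_gamma_def using Au by blast
qed


lemma case_n1:
  fixes g :: "real^'m::finite"
  assumes n1: "CARD('n::finite) = 1" and m2: "CARD('m) \<ge> 2" and g: "g \<in> unit_cube"
  shows "(Omega_gamma g :: (real^'n^'m) set) \<noteq> {}"
proof -
  have "\<forall>i. \<exists>X. 0 \<le> X \<and> X < 1 \<and> (\<forall>k. \<exists>p::int.
     \<bar>real (Qs k) * X - g $ i - of_int p\<bar> \<le> real (Qs k) / real (Qs (Suc k)))"
    using approx_real by blast
  then obtain a where a: "\<And>i. 0 \<le> a i" "\<And>i. a i < 1"
    "\<And>i k. \<exists>p::int. \<bar>real (Qs k) * a i - g $ i - of_int p\<bar> \<le> real (Qs k) / real (Qs (Suc k))"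
    by metis
  define A :: "real^'n^'m" where "A = (\<chi> i j. a i)"
  have Au: "A \<in> unit_mat" using a unfolding A_def unit_mat_def by auto
  define v :: "nat \<Rightarrow> int^'n" where "v k = (\<chi> j. int (Qs k))" for k
  have inj: "inj v"
  proof (rule injI)
    fix s t assume "v s = v t"
    then have "Qs s = Qs t" unfolding v_def by (simp add: vec_eq_iff)
    have sm: "Qs j < Qs l" if "j < l" for j l
    proof -
      have "Qs j < 2 * Qs j" using Qs_ge2[of j] by linarith
      also have "\<dots> \<le> Qs (Suc j)" by (rule Qs_Suc_ge)
      also have "\<dots> \<le> Qs l" using that by (intro Qs_mono) simp
      finally show ?thesis .
    qed
    show "s = t"
    proof (rule ccontr)
      assume "s \<noteq> t"
      then have "s < t \<or> t < s" by linarith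
      then show False using sm \<open>Qs s = Qs t\<close> by (metis less_irrefl)
    qed
  qed
  have "(A, g) \<in> Omega"
    unfolding Omega_def
  proof
    fix \<psi> assume psi: "\<psi> \<in> D_class TYPE('m) TYPE('n)"
    have nn: "\<forall>q. 0 \<le> \<psi> q" and dec: "\<forall>a b. a \<le> b \<longrightarrow> \<psi> b \<le> \<psi> a"
      and ns: "\<not> summable (\<lambda>k. real (Suc k) ^ (CARD('n) - 1) * \<psi> (Suc k) ^ CARD('m))"
      using psi unfolding D_class_def by auto
    have ns': "\<not> summable (\<lambda>k. \<psi> (Suc k) ^ CARD('m))" using ns n1 by simp
    define S where "S = {k. real (Qs k) / real (Qs (Suc k)) < \<psi> (Qs k)}"
    have infS: "infinite S" unfolding S_def by (rule freq[OF nn dec ns' m2])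
    have "v ` S \<subseteq> {q::int^'n. dist_Zm (A *v (\<chi> j. real_of_int (q $ j)) - g) < \<psi> (int_sup_norm q)}"
    proof
      fix w assume "w \<in> v ` S"
      then obtain k where k: "k \<in> S" "w = v k" by blast
      have Av: "(A *v (\<chi> j. real_of_int (w $ j))) $ i = real (Qs k) * a i" for i
        unfolding A_def k(2) v_def matrix_vector_mult_def using n1 by simp
      obtain p where p: "\<And>i. \<bar>real (Qs k) * a i - g $ i - of_int (p i)\<bar> \<le> real (Qs k) / real (Qs (Suc k))"
        using a(3)[where k=k] by metis
      have "dist_Zm (A *v (\<chi> j. real_of_int (w $ j)) - g)
          \<le> real_sup_norm ((A *v (\<chi> j. real_of_int (w $ j)) - g) - (\<chi> i. real_of_int (((\<chi> i. p i)::int^'m) $ i)))"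
        by (rule dist_Zm_le)
      also have "\<dots> \<le> real (Qs k) / real (Qs (Suc k))"
        by (rule rsn_le) (simp add: Av p)
      also have "\<dots> < \<psi> (Qs k)" using k(1) unfolding S_def by simp
      also have "Qs k = int_sup_norm w" unfolding k(2) v_def by (simp add: isn_const)
      finally show "w \<in> {q::int^'n. dist_Zm (A *v (\<chi> j. real_of_int (q $ j)) - g) < \<psi> (int_sup_norm q)}"
        by simp
    qed
    moreover have "infinite (v ` S)" using inj infS by (simp add: finite_image_iff inj_on_subset)
    ultimately show "(A, g) \<in> W_set \<psi>" unfolding W_set_def using Au g infinite_super by blast
  qed
  then show ?thesis unfolding Omega_gamma_def using Au by blast
qed

theorem corollary1p1:
  fixes g :: "real^'m"
  assumes "CARD('m) * CARD('n) > 1"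
    and "g \<in> unit_cube"
  shows "(Omega_gamma g :: (real^'n^'m) set) \<noteq> {}"
proof (cases "CARD('n) \<ge> 2")
  case True
  then show ?thesis using case_n2 assms(2) by blast
next
  case False
  have "CARD('n) > 0" by (rule zero_less_card_finite)
  then have n1: "CARD('n) = 1" using False by linarith
  then have "CARD('m) \<ge> 2" using assms(1) by simp
  then show ?thesis using case_n1[OF n1 _ assms(2)] by blast
qed

end
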